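(* Let $S$ be an intra-regular $\Gamma$-AG$^{**}$-groupoid. Then every right $\Gamma$-ideal, every left $\Gamma$-ideal, and every two-sided $\Gamma$-ideal of $S$ is $\Gamma$-semiprime.
   Context: Let $S$ and $\Gamma$ be nonempty sets with a map $S\times\Gamma\times S\to S$, $(x,\gamma,y)\mapsto x\gamma y$. $S$ is a $\Gamma$-AG-groupoid if $(x\gamma y)\delta z=(z\gamma y)\delta x$ for all $x,y,z\in S$, $\gamma,\delta\in\Gamma$; it is a $\Gamma$-AG$^{**}$-groupoid if moreover $a\alpha(b\beta c)=b\alpha(a\beta c)$ for all $a,b,c\in S$, $\alpha,\beta\in\Gamma$. For subsets $A,B\subseteq S$, $A\Gamma B=\{a\gamma b: a\in A,\gamma\in\Gamma,b\in B\}$. $S$ is intra-regular if for every $a\in S$ there exist $x,y\in S$ and $\beta,\gamma,\delta\in\Gamma$ with $a=(x\beta(a\delta a))\gamma y$. A nonempty subset $A$ is a left (right) $\Gamma$-ideal if $S\Gamma A\subseteq A$ ($A\Gamma S\subseteq A$), two-sided if both. A subset $P\subseteq S$ is $\Gamma$-semiprime if for every $a\in S$, $a\Gamma a\subseteq P$ implies $a\in P$. *)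

theory Defs
  imports Main
begin

definition gamma_closed :: "'a set \<Rightarrow> 'g set \<Rightarrow> ('a \<Rightarrow> 'g \<Rightarrow> 'a \<Rightarrow> 'a) \<Rightarrow> bool" where
  "gamma_closed S G m \<longleftrightarrow> (\<forall>x\<in>S. \<forall>g\<in>G. \<forall>y\<in>S. m x g y \<in> S)"

definition gamma_AG_groupoid :: "'a set \<Rightarrow> 'g set \<Rightarrow> ('a \<Rightarrow> 'g \<Rightarrow> 'a \<Rightarrow> 'a) \<Rightarrow> bool" where
  "gamma_AG_groupoid S G m \<longleftrightarrow> S \<noteq> {} \<and> G \<noteq> {} \<and> gamma_closed S G m \<and>
     (\<forall>x\<in>S. \<forall>y\<in>S. \<forall>z\<in>S. \<forall>g\<in>G. \<forall>d\<in>G. m (m x g y) d z = m (m z g y) d x)"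

definition gamma_AG_ss_groupoid :: "'a set \<Rightarrow> 'g set \<Rightarrow> ('a \<Rightarrow> 'g \<Rightarrow> 'a \<Rightarrow> 'a) \<Rightarrow> bool" where
  "gamma_AG_ss_groupoid S G m \<longleftrightarrow> gamma_AG_groupoid S G m \<and>
     (\<forall>a\<in>S. \<forall>b\<in>S. \<forall>c\<in>S. \<forall>al\<in>G. \<forall>be\<in>G. m a al (m b be c) = m b al (m a be c))"

definition gprod :: "('a \<Rightarrow> 'g \<Rightarrow> 'a \<Rightarrow> 'a) \<Rightarrow> 'a set \<Rightarrow> 'g set \<Rightarrow> 'a set \<Rightarrow> 'a set" where
  "gprod m A G B = {m a g b | a g b. a \<in> A \<and> g \<in> G \<and> b \<in> B}"

definition intra_regular :: "'a set \<Rightarrow> 'g set \<Rightarrow> ('a \<Rightarrow> 'g \<Rightarrow> 'a \<Rightarrow> 'a) \<Rightarrow> bool" where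
  "intra_regular S G m \<longleftrightarrow> (\<forall>a\<in>S. \<exists>x\<in>S. \<exists>y\<in>S. \<exists>be\<in>G. \<exists>ga\<in>G. \<exists>de\<in>G.
      a = m (m x be (m a de a)) ga y)"

definition left_gamma_ideal :: "'a set \<Rightarrow> 'g set \<Rightarrow> ('a \<Rightarrow> 'g \<Rightarrow> 'a \<Rightarrow> 'a) \<Rightarrow> 'a set \<Rightarrow> bool" where
  "left_gamma_ideal S G m A \<longleftrightarrow> A \<noteq> {} \<and> A \<subseteq> S \<and> gprod m S G A \<subseteq> A"

definition right_gamma_ideal :: "'a set \<Rightarrow> 'g set \<Rightarrow> ('a \<Rightarrow> 'g \<Rightarrow> 'a \<Rightarrow> 'a) \<Rightarrow> 'a set \<Rightarrow> bool" where
  "right_gamma_ideal S G m A \<longleftrightarrow> A \<noteq> {} \<and> A \<subseteq> S \<and> gprod m A G S \<subseteq> A"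

definition two_sided_gamma_ideal :: "'a set \<Rightarrow> 'g set \<Rightarrow> ('a \<Rightarrow> 'g \<Rightarrow> 'a \<Rightarrow> 'a) \<Rightarrow> 'a set \<Rightarrow> bool" where
  "two_sided_gamma_ideal S G m A \<longleftrightarrow> left_gamma_ideal S G m A \<and> right_gamma_ideal S G m A"

definition gamma_semiprime :: "'a set \<Rightarrow> 'g set \<Rightarrow> ('a \<Rightarrow> 'g \<Rightarrow> 'a \<Rightarrow> 'a) \<Rightarrow> 'a set \<Rightarrow> bool" where
  "gamma_semiprime S G m P \<longleftrightarrow> P \<subseteq> S \<and> (\<forall>a\<in>S. gprod m {a} G {a} \<subseteq> P \<longrightarrow> a \<in> P)"

end

theory Submission
  imports Defs
begin

lemma two_sided_semiprime:
  assumes "intra_regular S G m" "left_gamma_ideal S G m A" "right_gamma_ideal S G m A"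
  shows "gamma_semiprime S G m A"
  unfolding gamma_semiprime_def
proof (intro conjI ballI impI)
  show "A \<subseteq> S" using assms(2) unfolding left_gamma_ideal_def by blast
  fix a assume aS: "a \<in> S" and sq: "gprod m {a} G {a} \<subseteq> A"
  obtain x y be ga de where xy: "x \<in> S" "y \<in> S" "be \<in> G" "ga \<in> G" "de \<in> G"
    and a: "a = m (m x be (m a de a)) ga y"
    using assms(1) aS unfolding intra_regular_def by blast
  have "m a de a \<in> A" using sq xy unfolding gprod_def by blast
  hence "m x be (m a de a) \<in> A" using assms(2) xy unfolding left_gamma_ideal_def gprod_def by blast
  hence "m (m x be (m a de a)) ga y \<in> A" using assms(3) xy unfolding right_gamma_ideal_def gprod_def by blast
  thus "a \<in> A" using a by simp
qed

lemma left_imp_right: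
  assumes ss: "gamma_AG_ss_groupoid S G m" and ir: "intra_regular S G m" and L: "left_gamma_ideal S G m A"
  shows "right_gamma_ideal S G m A"
proof -
  have AS: "A \<subseteq> S" and nA: "A \<noteq> {}" and LL: "\<And>p g q. p \<in> S \<Longrightarrow> g \<in> G \<Longrightarrow> q \<in> A \<Longrightarrow> m p g q \<in> A"
    using L unfolding left_gamma_ideal_def gprod_def by blast+
  have cl: "\<And>p g q. p \<in> S \<Longrightarrow> g \<in> G \<Longrightarrow> q \<in> S \<Longrightarrow> m p g q \<in> S"
    using ss unfolding gamma_AG_ss_groupoid_def gamma_AG_groupoid_def gamma_closed_def by blast
  have LI: "\<And>x y z g d. x \<in> S \<Longrightarrow> y \<in> S \<Longrightarrow> z \<in> S \<Longrightarrow> g \<in> G \<Longrightarrow> d \<in> G \<Longrightarrow> m (m x g y) d z = m (m z g y) d x"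
    using ss unfolding gamma_AG_ss_groupoid_def gamma_AG_groupoid_def by blast
  have SS: "\<And>a b c al be. a \<in> S \<Longrightarrow> b \<in> S \<Longrightarrow> c \<in> S \<Longrightarrow> al \<in> G \<Longrightarrow> be \<in> G \<Longrightarrow> m a al (m b be c) = m b al (m a be c)"
    using ss unfolding gamma_AG_ss_groupoid_def by blast
  have "m s g t \<in> A" if s: "s \<in> A" and g: "g \<in> G" and t: "t \<in> S" for s g t
  proof -
    have sS: "s \<in> S" using s AS by blast
    obtain x y be ga de where xy: "x \<in> S" "y \<in> S" "be \<in> G" "ga \<in> G" "de \<in> G"
      and a: "s = m (m x be (m s de s)) ga y"
      using ir sS unfolding intra_regular_def by blast
    have "m s g t = m (m t ga y) g (m x be (m s de s))"
      using a LI[of "m x be (m s de s)" y t ga g] xy cl sS t g by simp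
    also have "\<dots> = m x g (m (m t ga y) be (m s de s))"
      using SS[of "m t ga y" x "m s de s" g be] xy cl sS t g by simp
    also have "\<dots> \<in> A"
      using LL xy cl sS t g s by simp
    finally show ?thesis .
  qed
  thus ?thesis using AS nA unfolding right_gamma_ideal_def gprod_def by blast
qed

lemma right_imp_left:
  assumes ss: "gamma_AG_ss_groupoid S G m" and ir: "intra_regular S G m" and R: "right_gamma_ideal S G m A"
  shows "left_gamma_ideal S G m A"
proof -
  have AS: "A \<subseteq> S" and nA: "A \<noteq> {}" and RR: "\<And>p g q. p \<in> A \<Longrightarrow> g \<in> G \<Longrightarrow> q \<in> S \<Longrightarrow> m p g q \<in> A"
    using R unfolding right_gamma_ideal_def gprod_def by blast+
  have cl: "\<And>p g q. p \<in> S \<Longrightarrow> g \<in> G \<Longrightarrow> q \<in> S \<Longrightarrow> m p g q \<in> S"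
    using ss unfolding gamma_AG_ss_groupoid_def gamma_AG_groupoid_def gamma_closed_def by blast
  have SS: "\<And>a b c al be. a \<in> S \<Longrightarrow> b \<in> S \<Longrightarrow> c \<in> S \<Longrightarrow> al \<in> G \<Longrightarrow> be \<in> G \<Longrightarrow> m a al (m b be c) = m b al (m a be c)"
    using ss unfolding gamma_AG_ss_groupoid_def by blast
  have "m t g s \<in> A" if s: "s \<in> A" and g: "g \<in> G" and t: "t \<in> S" for s g t
  proof -
    have sS: "s \<in> S" using s AS by blast
    obtain x y be ga de where xy: "x \<in> S" "y \<in> S" "be \<in> G" "ga \<in> G" "de \<in> G"
      and a: "s = m (m x be (m s de s)) ga y"
      using ir sS unfolding intra_regular_def by blast
    have "m t g s = m (m x be (m s de s)) g (m t ga y)"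
      using a SS[of t "m x be (m s de s)" y g ga] xy cl sS t g by simp
    also have "\<dots> = m (m s be (m x de s)) g (m t ga y)"
      using SS[of x s s be de] xy sS by simp
    also have "\<dots> \<in> A"
      using RR xy cl sS t g s by simp
    finally show ?thesis .
  qed
  thus ?thesis using AS nA unfolding left_gamma_ideal_def gprod_def by blast
qed

theorem mainTheorem14:
  fixes S :: "'a set" and G :: "'g set" and m :: "'a \<Rightarrow> 'g \<Rightarrow> 'a \<Rightarrow> 'a"
  assumes "gamma_AG_ss_groupoid S G m"
    and "intra_regular S G m"
  shows "(\<forall>A. right_gamma_ideal S G m A \<longrightarrow> gamma_semiprime S G m A) \<and>
         (\<forall>A. left_gamma_ideal S G m A \<longrightarrow> gamma_semiprime S G m A) \<and>
         (\<forall>A. two_sided_gamma_ideal S G m A \<longrightarrow> gamma_semiprime S G m A)"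
  using two_sided_semiprime[OF assms(2)] left_imp_right[OF assms] right_imp_left[OF assms]
  unfolding two_sided_gamma_ideal_def by blast

end
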